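(* Let $P$ be a binary pattern that contains none of $Q_1,Q_2,Q_3,Q_4$ as an interval minor, that contains both $D_2$ and $\overline D_2$ as interval minors, and that cannot be covered by two lines. Then $P$ can be transformed by a rotation or a reflection into a pattern $P_0$ of one of the following two types: Type 1: $P_0$ has three rows $r<r'<r''$ and two columns $c<c'$ with $\mathrm{supp}(P_0)\subseteq(\{r'\}\times[c,c'])\cup\{(r,c),(r'',c),(r,c'),(r'',c')\}$; Type 2: $P_0$ has two rows $r<r'$ and two columns $c<c'$ with $\mathrm{supp}(P_0)\subseteq(\{r\}\times[c,c'])\cup(\{r'\}\times[c])\cup([r]\times\{c'\})\cup\{(r',c')\}$.
   Context: All matrices are binary; rows numbered top to bottom, columns left to right; $(i,j)$ is the entry in row $i$, column $j$; $\mathrm{supp}$ is the set of 1-entries; $[a,b]=\{a,\dots,b\}$, $(a,b]=[a+1,b]$, $[n]=[1,n]$. A pattern $P\in\{0,1\}^{k\times\ell}$ is an interval minor of $M\in\{0,1\}^{m\times n}$ if there are integers $0=r_0<\dots<r_k=m$ and $0=c_0<\dots<c_\ell=n$ such that for each 1-entry $(i,j)$ of $P$ the submatrix of $M$ on rows $(r_{i-1},r_i]$ and columns $(c_{j-1},c_j]$ contains a 1-entry. $Q_1,\dots,Q_4\in\{0,1\}^{3\times3}$ have supports $\{(1,2),(2,1),(3,3)\}$, $\{(1,2),(2,3),(3,1)\}$, $\{(1,1),(2,3),(3,2)\}$, $\{(1,3),(2,1),(3,2)\}$. $D_2$ has support $\{(1,1),(2,2)\}$ and $\overline D_2$ has support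 $\{(1,2),(2,1)\}$ (both $2\times2$). A line is a row or column; a matrix can be covered by $t$ lines if some $t$ lines together contain all its 1-entries. *)

theory Defs
  imports Main
begin

text \<open>A binary m x n matrix is represented by its dimensions and its support
  (set of 1-entries, 1-indexed: row i, column j).\<close>
type_synonym bmat = "nat \<times> nat \<times> (nat \<times> nat) set"

definition wf_mat :: "bmat \<Rightarrow> bool" where
  "wf_mat A = (case A of (m, n, S) \<Rightarrow> S \<subseteq> {1..m} \<times> {1..n})"

definition interval_minor :: "bmat \<Rightarrow> bmat \<Rightarrow> bool" where
  "interval_minor P M = (case P of (k, l, SP) \<Rightarrow> case M of (m, n, SM) \<Rightarrow>
     (\<exists>r c :: nat \<Rightarrow> nat.
        r 0 = 0 \<and> r k = m \<and> (\<forall>i<k. r i < r (Suc i)) \<and>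
        c 0 = 0 \<and> c l = n \<and> (\<forall>j<l. c j < c (Suc j)) \<and>
        (\<forall>(i, j) \<in> SP. \<exists>(a, b) \<in> SM.
           r (i - 1) < a \<and> a \<le> r i \<and> c (j - 1) < b \<and> b \<le> c j)))"

definition Q1 :: bmat where "Q1 = (3, 3, {(1,2),(2,1),(3,3)})"
definition Q2 :: bmat where "Q2 = (3, 3, {(1,2),(2,3),(3,1)})"
definition Q3 :: bmat where "Q3 = (3, 3, {(1,1),(2,3),(3,2)})"
definition Q4 :: bmat where "Q4 = (3, 3, {(1,3),(2,1),(3,2)})"
definition D2 :: bmat where "D2 = (2, 2, {(1,1),(2,2)})"
definition D2bar :: bmat where "D2bar = (2, 2, {(1,2),(2,1)})"

definition coverable_by :: "nat \<Rightarrow> bmat \<Rightarrow> bool" where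
  "coverable_by t A = (case A of (m, n, S) \<Rightarrow>
     (\<exists>R C. R \<subseteq> {1..m} \<and> C \<subseteq> {1..n} \<and> card R + card C \<le> t \<and>
        (\<forall>(i, j) \<in> S. i \<in> R \<or> j \<in> C)))"

definition mtransp :: "bmat \<Rightarrow> bmat" where
  "mtransp A = (case A of (m, n, S) \<Rightarrow> (n, m, {(j, i) | i j. (i, j) \<in> S}))"
definition row_rev :: "bmat \<Rightarrow> bmat" where
  "row_rev A = (case A of (m, n, S) \<Rightarrow> (m, n, {(m + 1 - i, j) | i j. (i, j) \<in> S}))"
definition col_rev :: "bmat \<Rightarrow> bmat" where
  "col_rev A = (case A of (m, n, S) \<Rightarrow> (m, n, {(i, n + 1 - j) | i j. (i, j) \<in> S}))"

text \<open>The 8 rotations/reflections (including the identity rotation).\<close>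
definition dihedral_image :: "bmat \<Rightarrow> bmat \<Rightarrow> bool" where
  "dihedral_image A B = (\<exists>t a b :: bool.
     B = (if b then col_rev else id) ((if a then row_rev else id) ((if t then mtransp else id) A)))"

definition type1 :: "bmat \<Rightarrow> bool" where
  "type1 A = (case A of (k, l, S) \<Rightarrow>
     (\<exists>r r' r'' c c'. 1 \<le> r \<and> r < r' \<and> r' < r'' \<and> r'' \<le> k \<and> 1 \<le> c \<and> c < c' \<and> c' \<le> l \<and>
        S \<subseteq> ({r'} \<times> {c..c'}) \<union> {(r, c), (r'', c), (r, c'), (r'', c')}))"

definition type2 :: "bmat \<Rightarrow> bool" where
  "type2 A = (case A of (k, l, S) \<Rightarrow>
     (\<exists>r r' c c'. 1 \<le> r \<and> r < r' \<and> r' \<le> k \<and> 1 \<le> c \<and> c < c' \<and> c' \<le> l \<and>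
        S \<subseteq> ({r} \<times> {c..c'}) \<union> ({r'} \<times> {1..c}) \<union> ({1..r} \<times> {c'}) \<union> {(r', c')}))"

end

theory Submission
  imports Defs
begin


definition inc :: "nat\<times>nat \<Rightarrow> nat\<times>nat \<Rightarrow> bool" where
  "inc p q = ((fst p < fst q \<and> snd p < snd q) \<or> (fst q < fst p \<and> snd q < snd p))"
definition dec :: "nat\<times>nat \<Rightarrow> nat\<times>nat \<Rightarrow> bool" where
  "dec p q = ((fst p < fst q \<and> snd q < snd p) \<or> (fst q < fst p \<and> snd p < snd q))"
definition good :: "(nat\<times>nat) set \<Rightarrow> bool" where
  "good S = (\<forall>p\<in>S. \<forall>q\<in>S. \<forall>s\<in>S. \<not>(inc p q \<and> inc p s \<and> dec q s) \<and> \<not>(dec p q \<and> dec p s \<and> inc q s))"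

lemma tri:
  assumes "good S" "(i1,j1)\<in>S" "(i2,j2)\<in>S" "(i3,j3)\<in>S" "i1<i2" "i2<i3"
    "j1\<noteq>j2" "j1\<noteq>j3" "j2\<noteq>j3"
  shows "(j1<j2 \<and> j2<j3) \<or> (j2<j1 \<and> j3<j2)"
proof (rule ccontr)
  assume c: "\<not> ?thesis"
  have g: "\<And>p q s. p\<in>S \<Longrightarrow> q\<in>S \<Longrightarrow> s\<in>S \<Longrightarrow> \<not>(inc p q \<and> inc p s \<and> dec q s) \<and> \<not>(dec p q \<and> dec p s \<and> inc q s)"
    using assms(1) unfolding good_def by blast
  note g1 = g[OF assms(2) assms(3) assms(4)] and g2 = g[OF assms(3) assms(2) assms(4)]
    and g3 = g[OF assms(4) assms(2) assms(3)]
  show False using g1 g2 g3 c assms(5-9) unfolding inc_def dec_def by auto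
qed

lemma im_D2:
  assumes "interval_minor D2 (m,n,S)"
  shows "\<exists>p\<in>S. \<exists>q\<in>S. fst p < fst q \<and> snd p < snd q"
  using assms unfolding interval_minor_def D2_def
  apply clarsimp
  subgoal for r c a b aa ba
    by (rule bexI[where x="(a,b)"], rule bexI[where x="(aa,ba)"], auto)
  done

lemma im_D2bar:
  assumes "interval_minor D2bar (m,n,S)"
  shows "\<exists>p\<in>S. \<exists>q\<in>S. fst p < fst q \<and> snd q < snd p"
  using assms unfolding interval_minor_def D2bar_def
  apply clarsimp
  subgoal for r c a b aa ba
    by (rule bexI[where x="(a,b)"], rule bexI[where x="(aa,ba)"], auto)
  done

definition cut3 :: "nat \<Rightarrow> nat \<Rightarrow> nat \<Rightarrow> nat \<Rightarrow> nat" where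
  "cut3 x y z t = (if t = 0 then 0 else if t = 1 then x else if t = 2 then y else z)"

lemma cut3_ok: "0 < x \<Longrightarrow> x < y \<Longrightarrow> y < z \<Longrightarrow> cut3 x y z 0 = 0 \<and> cut3 x y z 3 = z \<and> (\<forall>i<3. cut3 x y z i < cut3 x y z (Suc i))"
  by (auto simp: cut3_def less_Suc_eq numeral_3_eq_3)

lemma cut3_vals: "cut3 x y z 0 = 0" "cut3 x y z 1 = x" "cut3 x y z 2 = y" "cut3 x y z 3 = z"
  by (auto simp: cut3_def)

lemma im3:
  assumes "wf_mat (m,n,S)" "(i1,j1)\<in>S" "(i2,j2)\<in>S" "(i3,j3)\<in>S" "i1<i2" "i2<i3"
    "j1\<noteq>j2" "j1\<noteq>j3" "j2\<noteq>j3" "\<not>((j1<j2 \<and> j2<j3) \<or> (j2<j1 \<and> j3<j2))"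
  shows "interval_minor Q1 (m,n,S) \<or> interval_minor Q2 (m,n,S) \<or> interval_minor Q3 (m,n,S) \<or> interval_minor Q4 (m,n,S)"
proof -
  have w: "i1 \<ge> 1" "i3 \<le> m" "j1\<ge>1" "j2\<ge>1" "j3\<ge>1" "j1\<le>n" "j2\<le>n" "j3\<le>n"
    using assms(1-4) unfolding wf_mat_def by auto
  let ?r = "cut3 i1 i2 m"
  have r: "?r 0 = 0" "?r 3 = m" "\<forall>i<3. ?r i < ?r (Suc i)" using cut3_ok[of i1 i2 m] w assms(5,6) by auto
  have rv: "?r 1 = i1" "?r 2 = i2" by (auto simp: cut3_def)
  consider "j2<j1" "j1<j3" | "j3<j1" "j1<j2" | "j1<j3" "j3<j2" | "j2<j3" "j3<j1"
    using assms(7-10) by linarith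
  then show ?thesis
  proof cases
    case 1
    let ?c = "cut3 j2 j1 n"
    have c: "?c 0 = 0" "?c 3 = n" "\<forall>i<3. ?c i < ?c (Suc i)" using cut3_ok[of j2 j1 n] w 1 by auto
    have "interval_minor Q1 (m,n,S)" unfolding interval_minor_def Q1_def
      apply simp apply (rule exI[of _ ?r]) apply (simp add: r) apply (rule exI[of _ ?c]) 
      using assms 1 w by (auto simp: c cut3_def; fastforce intro: bexI[OF _ assms(2)] bexI[OF _ assms(3)] bexI[OF _ assms(4)])
    then show ?thesis by simp
  next
    case 2
    let ?c = "cut3 j3 j1 n"
    have c: "?c 0 = 0" "?c 3 = n" "\<forall>i<3. ?c i < ?c (Suc i)" using cut3_ok[of j3 j1 n] w 2 by auto
    have "interval_minor Q2 (m,n,S)" unfolding interval_minor_def Q2_def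
      apply simp apply (rule exI[of _ ?r]) apply (simp add: r) apply (rule exI[of _ ?c]) 
      using assms 2 w by (auto simp: c cut3_def; fastforce intro: bexI[OF _ assms(2)] bexI[OF _ assms(3)] bexI[OF _ assms(4)])
    then show ?thesis by simp
  next
    case 3
    let ?c = "cut3 j1 j3 n"
    have c: "?c 0 = 0" "?c 3 = n" "\<forall>i<3. ?c i < ?c (Suc i)" using cut3_ok[of j1 j3 n] w 3 by auto
    have "interval_minor Q3 (m,n,S)" unfolding interval_minor_def Q3_def
      apply simp apply (rule exI[of _ ?r]) apply (simp add: r) apply (rule exI[of _ ?c]) 
      using assms 3 w by (auto simp: c cut3_def; fastforce intro: bexI[OF _ assms(2)] bexI[OF _ assms(3)] bexI[OF _ assms(4)])
    then show ?thesis by simp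
  next
    case 4
    let ?c = "cut3 j2 j3 n"
    have c: "?c 0 = 0" "?c 3 = n" "\<forall>i<3. ?c i < ?c (Suc i)" using cut3_ok[of j2 j3 n] w 4 by auto
    have "interval_minor Q4 (m,n,S)" unfolding interval_minor_def Q4_def
      apply simp apply (rule exI[of _ ?r]) apply (simp add: r) apply (rule exI[of _ ?c]) 
      using assms 4 w by (auto simp: c cut3_def; fastforce intro: bexI[OF _ assms(2)] bexI[OF _ assms(3)] bexI[OF _ assms(4)])
    then show ?thesis by simp
  qed
qed



definition mono3 :: "(nat\<times>nat) set \<Rightarrow> bool" where
  "mono3 S = (\<forall>i1 j1 i2 j2 i3 j3. (i1,j1)\<in>S \<longrightarrow> (i2,j2)\<in>S \<longrightarrow> (i3,j3)\<in>S \<longrightarrow> i1<i2 \<longrightarrow> i2<i3 \<longrightarrow>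
    j1\<noteq>j2 \<longrightarrow> j1\<noteq>j3 \<longrightarrow> j2\<noteq>j3 \<longrightarrow> (j1<j2 \<and> j2<j3) \<or> (j2<j1 \<and> j3<j2))"

lemma mono3_of:
  assumes "wf_mat (m,n,S)" "\<not> interval_minor Q1 (m,n,S)" "\<not> interval_minor Q2 (m,n,S)"
    "\<not> interval_minor Q3 (m,n,S)" "\<not> interval_minor Q4 (m,n,S)"
  shows "mono3 S"
  unfolding mono3_def using im3[OF assms(1)] assms(2-5) by blast

lemma good_of_mono3:
  assumes "mono3 S" shows "good S"
  unfolding good_def
proof (intro ballI)
  fix p q s assume ps: "p\<in>S" "q\<in>S" "s\<in>S"
  obtain a1 b1 a2 b2 a3 b3 where e: "p=(a1,b1)" "q=(a2,b2)" "s=(a3,b3)" by (cases p, cases q, cases s) auto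
  have M: "\<And>i1 j1 i2 j2 i3 j3. (i1,j1)\<in>S \<Longrightarrow> (i2,j2)\<in>S \<Longrightarrow> (i3,j3)\<in>S \<Longrightarrow> i1<i2 \<Longrightarrow> i2<i3 \<Longrightarrow>
    j1\<noteq>j2 \<Longrightarrow> j1\<noteq>j3 \<Longrightarrow> j2\<noteq>j3 \<Longrightarrow> (j1<j2 \<and> j2<j3) \<or> (j2<j1 \<and> j3<j2)"
    using assms unfolding mono3_def by blast
  have P: "(a1,b1)\<in>S" "(a2,b2)\<in>S" "(a3,b3)\<in>S" using ps e by auto
  note m1 = M[OF P(1) P(2) P(3)] and m2 = M[OF P(1) P(3) P(2)] and m3 = M[OF P(2) P(1) P(3)]
   and m4 = M[OF P(2) P(3) P(1)] and m5 = M[OF P(3) P(1) P(2)] and m6 = M[OF P(3) P(2) P(1)]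
  have G: "\<not> (inc (a1,b1) (a2,b2) \<and> inc (a1,b1) (a3,b3) \<and> dec (a2,b2) (a3,b3)) \<and> \<not> (dec (a1,b1) (a2,b2) \<and> dec (a1,b1) (a3,b3) \<and> inc (a2,b2) (a3,b3))"
  proof (rule ccontr)
    assume c: "\<not> ?thesis"
    then have d: "a1\<noteq>a2" "a1\<noteq>a3" "a2\<noteq>a3" "b1\<noteq>b2" "b1\<noteq>b3" "b2\<noteq>b3"
      unfolding inc_def dec_def by auto
    consider "a1<a2" "a2<a3" | "a1<a3" "a3<a2" | "a2<a1" "a1<a3" | "a2<a3" "a3<a1" | "a3<a1" "a1<a2" | "a3<a2" "a2<a1"
      using d by linarith
    then show False
    proof cases
      case 1 then show False using m1 d c unfolding inc_def dec_def by auto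
    next
      case 2 then show False using m2 d c unfolding inc_def dec_def by auto
    next
      case 3 then show False using m3 d c unfolding inc_def dec_def by auto
    next
      case 4 then show False using m4 d c unfolding inc_def dec_def by auto
    next
      case 5 then show False using m5 d c unfolding inc_def dec_def by auto
    next
      case 6 then show False using m6 d c unfolding inc_def dec_def by auto
    qed
  qed
  then show "\<not> (inc p q \<and> inc p s \<and> dec q s) \<and> \<not> (dec p q \<and> dec p s \<and> inc q s)"
    unfolding e .
qed



definition NC :: "(nat\<times>nat) set \<Rightarrow> bool" where
  "NC S = ((\<forall>i1 i2. \<exists>p\<in>S. fst p \<noteq> i1 \<and> fst p \<noteq> i2) \<and> (\<forall>j1 j2. \<exists>p\<in>S. snd p \<noteq> j1 \<and> snd p \<noteq> j2)
     \<and> (\<forall>i j. \<exists>p\<in>S. fst p \<noteq> i \<and> snd p \<noteq> j))"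

lemma card_le2: "card ({a,b} \<inter> X) \<le> (2::nat)"
proof -
  have "card ({a,b} \<inter> X) \<le> card {a,b}" by (rule card_mono) auto
  also have "\<dots> \<le> 2" by (simp add: card_insert_if)
  finally show ?thesis .
qed

lemma NC_of:
  assumes "wf_mat (m,n,S)" "\<not> coverable_by 2 (m,n,S)"
  shows "NC S"
proof -
  have w: "\<And>i j. (i,j)\<in>S \<Longrightarrow> 1\<le>i \<and> i\<le>m \<and> 1\<le>j \<and> j\<le>n" using assms(1) unfolding wf_mat_def by auto
  have c: "\<And>R C. R \<subseteq> {1..m} \<Longrightarrow> C \<subseteq> {1..n} \<Longrightarrow> card R + card C \<le> 2 \<Longrightarrow> \<exists>(i,j)\<in>S. i\<notin>R \<and> j\<notin>C"
    using assms(2) unfolding coverable_by_def by blast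
  have A: "\<exists>p\<in>S. fst p \<noteq> i1 \<and> fst p \<noteq> i2" for i1 i2
  proof -
    have "card ({i1,i2} \<inter> {1..m}) + card ({}::nat set) \<le> 2" using card_le2 by simp
    from c[OF _ _ this] obtain i j where "(i,j)\<in>S" "i \<notin> {i1,i2} \<inter> {1..m}" by auto
    then show ?thesis using w by force
  qed
  have B: "\<exists>p\<in>S. snd p \<noteq> j1 \<and> snd p \<noteq> j2" for j1 j2
  proof -
    have "card ({}::nat set) + card ({j1,j2} \<inter> {1..n}) \<le> 2" using card_le2 by simp
    from c[OF _ _ this] obtain i j where "(i,j)\<in>S" "j \<notin> {j1,j2} \<inter> {1..n}" by auto
    then show ?thesis using w by force
  qed
  have D: "\<exists>p\<in>S. fst p \<noteq> i \<and> snd p \<noteq> j" for i j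
  proof -
    have "card ({i} \<inter> {1..m}) \<le> 1" "card ({j} \<inter> {1..n}) \<le> 1"
      by (simp_all add: card_le_Suc0_iff_eq)
    then have "card ({i} \<inter> {1..m}) + card ({j} \<inter> {1..n}) \<le> 2" by simp
    from c[OF _ _ this] obtain i' j' where "(i',j')\<in>S" "i' \<notin> {i} \<inter> {1..m}" "j' \<notin> {j} \<inter> {1..n}" by auto
    then show ?thesis using w by force
  qed
  show ?thesis unfolding NC_def using A B D by blast
qed

definition hyp :: "bmat \<Rightarrow> bool" where
  "hyp A = (case A of (m,n,S) \<Rightarrow> wf_mat A \<and> good S \<and> NC S)"

lemma tr_eq: "mtransp (m,n,S) = (n,m,(\<lambda>(i,j). (j,i)) ` S)"
  unfolding mtransp_def by (auto simp: image_iff split: prod.splits)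
lemma rr_eq: "row_rev (m,n,S) = (m,n,(\<lambda>(i,j). (m+1-i,j)) ` S)"
  unfolding row_rev_def by (auto simp: image_iff split: prod.splits)
lemma cr_eq: "col_rev (m,n,S) = (m,n,(\<lambda>(i,j). (i,n+1-j)) ` S)"
  unfolding col_rev_def by (auto simp: image_iff split: prod.splits)

lemma good_img_pres:
  assumes "good S" "\<And>p q. p\<in>S \<Longrightarrow> q\<in>S \<Longrightarrow> inc (f p) (f q) = inc p q \<and> dec (f p) (f q) = dec p q"
  shows "good (f ` S)"
  unfolding good_def
proof (intro ballI)
  fix x y z assume "x\<in>f`S" "y\<in>f`S" "z\<in>f`S"
  then obtain p q s where "p\<in>S" "q\<in>S" "s\<in>S" "x = f p" "y = f q" "z = f s" by blast
  then show "\<not> (inc x y \<and> inc x z \<and> dec y z) \<and> \<not> (dec x y \<and> dec x z \<and> inc y z)"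
    using assms(1) assms(2)[of p q] assms(2)[of p s] assms(2)[of q s] unfolding good_def by blast
qed
lemma good_img_swap:
  assumes "good S" "\<And>p q. p\<in>S \<Longrightarrow> q\<in>S \<Longrightarrow> inc (f p) (f q) = dec p q \<and> dec (f p) (f q) = inc p q"
  shows "good (f ` S)"
  unfolding good_def
proof (intro ballI)
  fix x y z assume "x\<in>f`S" "y\<in>f`S" "z\<in>f`S"
  then obtain p q s where "p\<in>S" "q\<in>S" "s\<in>S" "x = f p" "y = f q" "z = f s" by blast
  then show "\<not> (inc x y \<and> inc x z \<and> dec y z) \<and> \<not> (dec x y \<and> dec x z \<and> inc y z)"
    using assms(1) assms(2)[of p q] assms(2)[of p s] assms(2)[of q s] unfolding good_def by blast
qed

lemma hyp_tr: "hyp A \<Longrightarrow> hyp (mtransp A)"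
proof -
  assume h: "hyp A"
  obtain m n S where A: "A = (m,n,S)" by (cases A) auto
  have w: "wf_mat (m,n,S)" "good S" "NC S" using h A unfolding hyp_def by auto
  have "wf_mat (n,m,(\<lambda>(i,j). (j,i)) ` S)" using w(1) unfolding wf_mat_def by auto
  moreover have "good ((\<lambda>(i,j). (j,i)) ` S)"
    by (rule good_img_pres[OF w(2)]) (auto simp: inc_def dec_def split: prod.splits)
  moreover have "NC ((\<lambda>(i,j). (j,i)) ` S)"
  proof -
    have a: "\<exists>p\<in>S. fst p \<noteq> i1 \<and> fst p \<noteq> i2" "\<exists>p\<in>S. snd p \<noteq> j1 \<and> snd p \<noteq> j2" "\<exists>p\<in>S. fst p \<noteq> i \<and> snd p \<noteq> j"
      for i1 i2 j1 j2 i j using w(3) unfolding NC_def by blast+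
    show ?thesis unfolding NC_def
    proof (intro conjI allI)
      fix i1 i2
      obtain p where p: "p\<in>S" "snd p \<noteq> i1" "snd p \<noteq> i2" using a(2) by blast
      then show "\<exists>p\<in>(\<lambda>(i,j). (j,i)) ` S. fst p \<noteq> i1 \<and> fst p \<noteq> i2"
        by (intro bexI[of _ "(snd p, fst p)"]) (auto simp: split_beta intro!: image_eqI[of _ _ p])
    next
      fix j1 j2
      obtain p where p: "p\<in>S" "fst p \<noteq> j1" "fst p \<noteq> j2" using a(1) by blast
      then show "\<exists>p\<in>(\<lambda>(i,j). (j,i)) ` S. snd p \<noteq> j1 \<and> snd p \<noteq> j2"
        by (intro bexI[of _ "(snd p, fst p)"]) (auto simp: split_beta intro!: image_eqI[of _ _ p])
    next
      fix i j
      obtain p where p: "p\<in>S" "fst p \<noteq> j" "snd p \<noteq> i" using a(3) by blast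
      then show "\<exists>p\<in>(\<lambda>(i,j). (j,i)) ` S. fst p \<noteq> i \<and> snd p \<noteq> j"
        by (intro bexI[of _ "(snd p, fst p)"]) (auto simp: split_beta intro!: image_eqI[of _ _ p])
    qed
  qed
  ultimately show ?thesis unfolding A tr_eq hyp_def by simp
qed

lemma hyp_rr: "hyp A \<Longrightarrow> hyp (row_rev A)"
proof -
  assume h: "hyp A"
  obtain m n S where A: "A = (m,n,S)" by (cases A) auto
  have w: "wf_mat (m,n,S)" "good S" "NC S" using h A unfolding hyp_def by auto
  have wf: "\<And>i j. (i,j)\<in>S \<Longrightarrow> 1\<le>i \<and> i\<le>m \<and> 1\<le>j \<and> j\<le>n" using w(1) unfolding wf_mat_def by auto
  have "wf_mat (m,n,(\<lambda>(i,j). (m+1-i,j)) ` S)" unfolding wf_mat_def by (clarsimp, frule wf, arith)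
  moreover have "good ((\<lambda>(i,j). (m+1-i,j)) ` S)"
    apply (rule good_img_swap[OF w(2)]) 
    subgoal for p q using wf[of "fst p" "snd p"] wf[of "fst q" "snd q"]
      by (cases p; cases q) (auto simp: inc_def dec_def)
    done
  moreover have "NC ((\<lambda>(i,j). (m+1-i,j)) ` S)"
  proof -
    have a: "\<exists>p\<in>S. fst p \<noteq> i1 \<and> fst p \<noteq> i2" "\<exists>p\<in>S. snd p \<noteq> j1 \<and> snd p \<noteq> j2" "\<exists>p\<in>S. fst p \<noteq> i \<and> snd p \<noteq> j"
      for i1 i2 j1 j2 i j using w(3) unfolding NC_def by blast+
    show ?thesis unfolding NC_def
    proof (intro conjI allI)
      fix i1 i2
      obtain p where p: "p\<in>S" "fst p \<noteq> m+1-i1" "fst p \<noteq> m+1-i2" using a(1) by blast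
      then show "\<exists>p\<in>(\<lambda>(i,j). (m+1-i,j)) ` S. fst p \<noteq> i1 \<and> fst p \<noteq> i2"
        using wf[of "fst p" "snd p"] by (intro bexI[of _ "(m+1-fst p, snd p)"]) (auto simp: split_beta intro!: image_eqI[of _ _ p])
    next
      fix j1 j2
      obtain p where p: "p\<in>S" "snd p \<noteq> j1" "snd p \<noteq> j2" using a(2) by blast
      then show "\<exists>p\<in>(\<lambda>(i,j). (m+1-i,j)) ` S. snd p \<noteq> j1 \<and> snd p \<noteq> j2"
        by (intro bexI[of _ "(m+1-fst p, snd p)"]) (auto simp: split_beta intro!: image_eqI[of _ _ p])
    next
      fix i j
      obtain p where p: "p\<in>S" "fst p \<noteq> m+1-i" "snd p \<noteq> j" using a(3) by blast
      then show "\<exists>p\<in>(\<lambda>(i,j). (m+1-i,j)) ` S. fst p \<noteq> i \<and> snd p \<noteq> j"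
        using wf[of "fst p" "snd p"] by (intro bexI[of _ "(m+1-fst p, snd p)"]) (auto simp: split_beta intro!: image_eqI[of _ _ p])
    qed
  qed
  ultimately show ?thesis unfolding A rr_eq hyp_def by simp
qed

lemma hyp_cr: "hyp A \<Longrightarrow> hyp (col_rev A)"
proof -
  assume h: "hyp A"
  obtain m n S where A: "A = (m,n,S)" by (cases A) auto
  have w: "wf_mat (m,n,S)" "good S" "NC S" using h A unfolding hyp_def by auto
  have wf: "\<And>i j. (i,j)\<in>S \<Longrightarrow> 1\<le>i \<and> i\<le>m \<and> 1\<le>j \<and> j\<le>n" using w(1) unfolding wf_mat_def by auto
  have "wf_mat (m,n,(\<lambda>(i,j). (i,n+1-j)) ` S)" unfolding wf_mat_def by (clarsimp, frule wf, arith)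
  moreover have "good ((\<lambda>(i,j). (i,n+1-j)) ` S)"
    apply (rule good_img_swap[OF w(2)]) 
    subgoal for p q using wf[of "fst p" "snd p"] wf[of "fst q" "snd q"]
      by (cases p; cases q) (auto simp: inc_def dec_def)
    done
  moreover have "NC ((\<lambda>(i,j). (i,n+1-j)) ` S)"
  proof -
    have a: "\<exists>p\<in>S. fst p \<noteq> i1 \<and> fst p \<noteq> i2" "\<exists>p\<in>S. snd p \<noteq> j1 \<and> snd p \<noteq> j2" "\<exists>p\<in>S. fst p \<noteq> i \<and> snd p \<noteq> j"
      for i1 i2 j1 j2 i j using w(3) unfolding NC_def by blast+
    show ?thesis unfolding NC_def
    proof (intro conjI allI)
      fix i1 i2
      obtain p where p: "p\<in>S" "fst p \<noteq> i1" "fst p \<noteq> i2" using a(1) by blast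
      then show "\<exists>p\<in>(\<lambda>(i,j). (i,n+1-j)) ` S. fst p \<noteq> i1 \<and> fst p \<noteq> i2"
        by (intro bexI[of _ "(fst p, n+1-snd p)"]) (auto simp: split_beta intro!: image_eqI[of _ _ p])
    next
      fix j1 j2
      obtain p where p: "p\<in>S" "snd p \<noteq> n+1-j1" "snd p \<noteq> n+1-j2" using a(2) by blast
      then show "\<exists>p\<in>(\<lambda>(i,j). (i,n+1-j)) ` S. snd p \<noteq> j1 \<and> snd p \<noteq> j2"
        using wf[of "fst p" "snd p"] by (intro bexI[of _ "(fst p, n+1-snd p)"]) (auto simp: split_beta intro!: image_eqI[of _ _ p])
    next
      fix i j
      obtain p where p: "p\<in>S" "fst p \<noteq> i" "snd p \<noteq> n+1-j" using a(3) by blast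
      then show "\<exists>p\<in>(\<lambda>(i,j). (i,n+1-j)) ` S. fst p \<noteq> i \<and> snd p \<noteq> j"
        using wf[of "fst p" "snd p"] by (intro bexI[of _ "(fst p, n+1-snd p)"]) (auto simp: split_beta intro!: image_eqI[of _ _ p])
    qed
  qed
  ultimately show ?thesis unfolding A cr_eq hyp_def by simp
qed



lemma wf_tr[simp]: "wf_mat A \<Longrightarrow> wf_mat (mtransp A)"
  by (cases A) (auto simp: tr_eq wf_mat_def)
lemma wf_rr[simp]: assumes "wf_mat A" shows "wf_mat (row_rev A)"
proof (cases A)
  case (fields m n S)
  have b: "\<And>i j. (i,j)\<in>S \<Longrightarrow> 1\<le>i \<and> i\<le>m \<and> 1\<le>j \<and> j\<le>n" using assms fields unfolding wf_mat_def by auto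
  show ?thesis unfolding fields rr_eq wf_mat_def by (clarsimp, frule b, arith)
qed
lemma wf_cr[simp]: assumes "wf_mat A" shows "wf_mat (col_rev A)"
proof (cases A)
  case (fields m n S)
  have b: "\<And>i j. (i,j)\<in>S \<Longrightarrow> 1\<le>i \<and> i\<le>m \<and> 1\<le>j \<and> j\<le>n" using assms fields unfolding wf_mat_def by auto
  show ?thesis unfolding fields cr_eq wf_mat_def by (clarsimp, frule b, arith)
qed

lemma tr_tr[simp]: "mtransp (mtransp A) = A"
  by (cases A) (auto simp: tr_eq image_image split_beta)
lemma rr_rr[simp]: "wf_mat A \<Longrightarrow> row_rev (row_rev A) = A"
proof (cases A)
  case (fields m n S)
  assume w: "wf_mat A"
  have "(\<lambda>(i,j). (m+1-i,j)) ` (\<lambda>(i,j). (m+1-i,j)) ` S = S"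
  proof -
    have b: "\<And>i j. (i,j)\<in>S \<Longrightarrow> i \<le> m" using w fields unfolding wf_mat_def by auto
    have "\<And>x. x\<in>S \<Longrightarrow> (\<lambda>(i,j). (m+1-i,j)) ((\<lambda>(i,j). (m+1-i,j)) x) = x"
    proof -
      fix x assume "x\<in>S"
      moreover obtain i j where "x=(i,j)" by (cases x)
      ultimately show "(\<lambda>(i,j). (m+1-i,j)) ((\<lambda>(i,j). (m+1-i,j)) x) = x" using b[of i j] by simp
    qed
    then show ?thesis by (simp add: image_image cong: image_cong)
  qed
  then show ?thesis using fields by (simp add: rr_eq)
qed
lemma cr_cr[simp]: "wf_mat A \<Longrightarrow> col_rev (col_rev A) = A"
proof (cases A)
  case (fields m n S)
  assume w: "wf_mat A"
  have "(\<lambda>(i,j). (i,n+1-j)) ` (\<lambda>(i,j). (i,n+1-j)) ` S = S"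
  proof -
    have b: "\<And>i j. (i,j)\<in>S \<Longrightarrow> j \<le> n" using w fields unfolding wf_mat_def by auto
    have "\<And>x. x\<in>S \<Longrightarrow> (\<lambda>(i,j). (i,n+1-j)) ((\<lambda>(i,j). (i,n+1-j)) x) = x"
    proof -
      fix x assume "x\<in>S"
      moreover obtain i j where "x=(i,j)" by (cases x)
      ultimately show "(\<lambda>(i,j). (i,n+1-j)) ((\<lambda>(i,j). (i,n+1-j)) x) = x" using b[of i j] by simp
    qed
    then show ?thesis by (simp add: image_image cong: image_cong)
  qed
  then show ?thesis using fields by (simp add: cr_eq)
qed
lemma rr_cr[simp]: "row_rev (col_rev A) = col_rev (row_rev A)"
  by (cases A) (simp add: rr_eq cr_eq image_image split_beta)
lemma tr_rr[simp]: "mtransp (row_rev A) = col_rev (mtransp A)"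
  by (cases A) (simp add: rr_eq cr_eq tr_eq image_image split_beta)
lemma tr_cr[simp]: "mtransp (col_rev A) = row_rev (mtransp A)"
  by (cases A) (simp add: rr_eq cr_eq tr_eq image_image split_beta)

definition conc :: "bmat \<Rightarrow> bool" where
  "conc A = (\<exists>P0. dihedral_image A P0 \<and> (type1 P0 \<or> type2 P0))"

lemma dih_iff: "dihedral_image A P \<longleftrightarrow> P \<in> {A, col_rev A, row_rev A, col_rev (row_rev A),
   mtransp A, col_rev (mtransp A), row_rev (mtransp A), col_rev (row_rev (mtransp A))}"
proof
  assume "dihedral_image A P"
  then obtain t a b where "P = (if b then col_rev else id) ((if a then row_rev else id) ((if t then mtransp else id) A))"
    unfolding dihedral_image_def by blast
  then show "P \<in> {A, col_rev A, row_rev A, col_rev (row_rev A),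
   mtransp A, col_rev (mtransp A), row_rev (mtransp A), col_rev (row_rev (mtransp A))}"
    by (cases t; cases a; cases b) auto
next
  assume "P \<in> {A, col_rev A, row_rev A, col_rev (row_rev A),
   mtransp A, col_rev (mtransp A), row_rev (mtransp A), col_rev (row_rev (mtransp A))}"
  then show "dihedral_image A P" unfolding dihedral_image_def
    apply (elim insertE)
    apply (rule exI[of _ False], rule exI[of _ False], rule exI[of _ False], simp)
    apply (rule exI[of _ False], rule exI[of _ False], rule exI[of _ True], simp)
    apply (rule exI[of _ False], rule exI[of _ True], rule exI[of _ False], simp)
    apply (rule exI[of _ False], rule exI[of _ True], rule exI[of _ True], simp)
    apply (rule exI[of _ True], rule exI[of _ False], rule exI[of _ False], simp)
    apply (rule exI[of _ True], rule exI[of _ False], rule exI[of _ True], simp)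
    apply (rule exI[of _ True], rule exI[of _ True], rule exI[of _ False], simp)
    apply (rule exI[of _ True], rule exI[of _ True], rule exI[of _ True], simp)
    by simp
qed

lemma conc_alt: "conc A \<longleftrightarrow> (\<exists>P0\<in>{A, col_rev A, row_rev A, col_rev (row_rev A),
   mtransp A, col_rev (mtransp A), row_rev (mtransp A), col_rev (row_rev (mtransp A))}. type1 P0 \<or> type2 P0)"
  unfolding conc_def dih_iff by blast

lemma conc_id: "type1 A \<or> type2 A \<Longrightarrow> conc A"
  unfolding conc_alt by blast

lemma conc_tr: "wf_mat A \<Longrightarrow> conc (mtransp A) \<Longrightarrow> conc A"
  unfolding conc_alt by auto
lemma conc_rr: "wf_mat A \<Longrightarrow> conc (row_rev A) \<Longrightarrow> conc A"
  unfolding conc_alt by auto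
lemma conc_cr: "wf_mat A \<Longrightarrow> conc (col_rev A) \<Longrightarrow> conc A"
  unfolding conc_alt by auto



lemma type1I:
  assumes "1 \<le> r" "r < r'" "r' < r''" "r'' \<le> k" "1 \<le> c" "c < c'" "c' \<le> l"
    "\<And>i j. (i,j)\<in>S \<Longrightarrow> (i = r' \<and> c \<le> j \<and> j \<le> c') \<or> ((i = r \<or> i = r'') \<and> (j = c \<or> j = c'))"
  shows "type1 (k,l,S)"
proof -
  have "S \<subseteq> ({r'} \<times> {c..c'}) \<union> {(r, c), (r'', c), (r, c'), (r'', c')}"
  proof
    fix x assume "x\<in>S"
    moreover obtain i j where "x = (i,j)" by (cases x)
    ultimately show "x \<in> ({r'} \<times> {c..c'}) \<union> {(r, c), (r'', c), (r, c'), (r'', c')}" using assms(8)[of i j] by auto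
  qed
  then show ?thesis unfolding type1_def prod.case using assms(1-7) by blast
qed

lemma type2I:
  assumes "1 \<le> r" "r < r'" "r' \<le> k" "1 \<le> c" "c < c'" "c' \<le> l"
    "\<And>i j. (i,j)\<in>S \<Longrightarrow> (i=r \<and> c\<le>j \<and> j\<le>c') \<or> (i=r' \<and> 1\<le>j \<and> j\<le>c) \<or> (1\<le>i \<and> i\<le>r \<and> j=c') \<or> (i=r' \<and> j=c')"
  shows "type2 (k,l,S)"
proof -
  have "S \<subseteq> ({r} \<times> {c..c'}) \<union> ({r'} \<times> {1..c}) \<union> ({1..r} \<times> {c'}) \<union> {(r', c')}"
  proof
    fix x assume "x\<in>S"
    moreover obtain i j where "x = (i,j)" by (cases x)
    ultimately show "x \<in> ({r} \<times> {c..c'}) \<union> ({r'} \<times> {1..c}) \<union> ({1..r} \<times> {c'}) \<union> {(r', c')}" using assms(7)[of i j] by auto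
  qed
  then show ?thesis unfolding type2_def prod.case using assms(1-6) by blast
qed

lemma conc_t1_id:
  assumes "1 \<le> r" "r < r'" "r' < r''" "r'' \<le> m" "1 \<le> c" "c < c'" "c' \<le> n"
    "\<And>i j. (i,j)\<in>S \<Longrightarrow> (i = r' \<and> c \<le> j \<and> j \<le> c') \<or> ((i = r \<or> i = r'') \<and> (j = c \<or> j = c'))"
  shows "conc (m,n,S)"
  by (rule conc_id, rule disjI1, rule type1I[OF assms])

lemma conc_t1_tr:
  assumes w: "wf_mat (m,n,S)" and "1 \<le> r" "r < r'" "r' < r''" "r'' \<le> n" "1 \<le> c" "c < c'" "c' \<le> m"
    and H: "\<And>i j. (i,j)\<in>S \<Longrightarrow> (j = r' \<and> c \<le> i \<and> i \<le> c') \<or> ((j = r \<or> j = r'') \<and> (i = c \<or> i = c'))"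
  shows "conc (m,n,S)"
proof -
  have "type1 (mtransp (m,n,S))" unfolding tr_eq
  proof (rule type1I[OF assms(2-8)])
    fix i j assume "(i,j) \<in> (\<lambda>(i,j). (j,i)) ` S"
    then obtain a b where "(a,b)\<in>S" "i = b" "j = a" by auto
    then show "(i = r' \<and> c \<le> j \<and> j \<le> c') \<or> ((i = r \<or> i = r'') \<and> (j = c \<or> j = c'))" using H by blast
  qed
  then show ?thesis by (intro conc_tr[OF w] conc_id) simp
qed

lemma conc_t2_rr:
  assumes w: "wf_mat (m,n,S)" and "1 \<le> r" "r < r'" "r' \<le> m" "1 \<le> c" "c < c'" "c' \<le> n"
    and H: "\<And>i j. (i,j)\<in>S \<Longrightarrow> (let I = m+1-i; J = j in
       (I=r \<and> c\<le>J \<and> J\<le>c') \<or> (I=r' \<and> 1\<le>J \<and> J\<le>c) \<or> (1\<le>I \<and> I\<le>r \<and> J=c') \<or> (I=r' \<and> J=c'))"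
  shows "conc (m,n,S)"
proof -
  have "type2 (row_rev (m,n,S))" unfolding rr_eq
  proof (rule type2I[OF assms(2-7)])
    fix i j assume "(i,j) \<in> (\<lambda>(i,j). (m+1-i,j)) ` S"
    then obtain a b where "(a,b)\<in>S" "i = m+1-a" "j = b" by auto
    then show "(i=r \<and> c\<le>j \<and> j\<le>c') \<or> (i=r' \<and> 1\<le>j \<and> j\<le>c) \<or> (1\<le>i \<and> i\<le>r \<and> j=c') \<or> (i=r' \<and> j=c')"
      using H[of a b] by (simp add: Let_def)
  qed
  then show ?thesis by (intro conc_rr[OF w] conc_id) simp
qed

lemma conc_t2_trcr:
  assumes w: "wf_mat (m,n,S)" and "1 \<le> r" "r < r'" "r' \<le> n" "1 \<le> c" "c < c'" "c' \<le> m"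
    and H: "\<And>i j. (i,j)\<in>S \<Longrightarrow> (let I = j; J = m+1-i in
       (I=r \<and> c\<le>J \<and> J\<le>c') \<or> (I=r' \<and> 1\<le>J \<and> J\<le>c) \<or> (1\<le>I \<and> I\<le>r \<and> J=c') \<or> (I=r' \<and> J=c'))"
  shows "conc (m,n,S)"
proof -
  have "type2 (col_rev (mtransp (m,n,S)))" unfolding tr_eq cr_eq image_image
  proof (rule type2I[OF assms(2-7)])
    fix i j assume "(i,j) \<in> (\<lambda>x. case case x of (i, j) \<Rightarrow> (j, i) of (i, j) \<Rightarrow> (i, m + 1 - j)) ` S"
    then obtain x where "x\<in>S" "(i,j) = (case case x of (i, j) \<Rightarrow> (j, i) of (i, j) \<Rightarrow> (i, m + 1 - j))" by blast
    then obtain a b where "(a,b)\<in>S" "i = b" "j = m+1-a" by (cases x) auto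
    then show "(i=r \<and> c\<le>j \<and> j\<le>c') \<or> (i=r' \<and> 1\<le>j \<and> j\<le>c) \<or> (1\<le>i \<and> i\<le>r \<and> j=c') \<or> (i=r' \<and> j=c')"
      using H[of a b] by (simp add: Let_def)
  qed
  then have "conc (col_rev (mtransp (m,n,S)))" by (intro conc_id) simp
  moreover have "wf_mat (mtransp (m,n,S))" using w by simp
  ultimately have "conc (mtransp (m,n,S))" using conc_cr by blast
  then show ?thesis by (rule conc_tr[OF w])
qed

lemma conc_t2_trrrcr:
  assumes w: "wf_mat (m,n,S)" and "1 \<le> r" "r < r'" "r' \<le> n" "1 \<le> c" "c < c'" "c' \<le> m"
    and H: "\<And>i j. (i,j)\<in>S \<Longrightarrow> (let I = n+1-j; J = m+1-i in
       (I=r \<and> c\<le>J \<and> J\<le>c') \<or> (I=r' \<and> 1\<le>J \<and> J\<le>c) \<or> (1\<le>I \<and> I\<le>r \<and> J=c') \<or> (I=r' \<and> J=c'))"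
  shows "conc (m,n,S)"
proof -
  have "type2 (col_rev (row_rev (mtransp (m,n,S))))" unfolding tr_eq cr_eq rr_eq image_image
  proof (rule type2I[OF assms(2-7)])
    fix i j assume "(i,j) \<in> (\<lambda>x. case case case x of (i, j) \<Rightarrow> (j, i) of (i, j) \<Rightarrow> (n + 1 - i, j) of (i, j) \<Rightarrow> (i, m + 1 - j)) ` S"
    then obtain x where "x\<in>S" "(i,j) = (case case case x of (i, j) \<Rightarrow> (j, i) of (i, j) \<Rightarrow> (n + 1 - i, j) of (i, j) \<Rightarrow> (i, m + 1 - j))" by blast
    then obtain a b where "(a,b)\<in>S" "i = n+1-b" "j = m+1-a" by (cases x) auto
    then show "(i=r \<and> c\<le>j \<and> j\<le>c') \<or> (i=r' \<and> 1\<le>j \<and> j\<le>c) \<or> (1\<le>i \<and> i\<le>r \<and> j=c') \<or> (i=r' \<and> j=c')"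
      using H[of a b] by (simp add: Let_def)
  qed
  then have "conc (col_rev (row_rev (mtransp (m,n,S))))" by (intro conc_id) simp
  moreover have w2: "wf_mat (mtransp (m,n,S))" using w by simp
  moreover have "wf_mat (row_rev (mtransp (m,n,S)))" using w2 by simp
  ultimately have "conc (row_rev (mtransp (m,n,S)))" using conc_cr by blast
  then have "conc (mtransp (m,n,S))" using conc_rr w2 by blast
  then show ?thesis by (rule conc_tr[OF w])
qed



lemma wfb: "wf_mat (m,n,S) \<Longrightarrow> (i,j)\<in>S \<Longrightarrow> 1\<le>i \<and> i\<le>m \<and> 1\<le>j \<and> j\<le>n"
  unfolding wf_mat_def by auto

lemma tri':
  assumes "good S" "(i1,j1)\<in>S" "(i2,j2)\<in>S" "(i3,j3)\<in>S" "i1<i2" "i2<i3"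
  shows "j1=j2 \<or> j1=j3 \<or> j2=j3 \<or> (j1<j2 \<and> j2<j3) \<or> (j2<j1 \<and> j3<j2)"
  using tri[OF assms] by blast

lemma nc_rr: assumes "NC S" shows "\<exists>i j. (i,j)\<in>S \<and> i\<noteq>i1 \<and> i\<noteq>i2"
proof -
  obtain p where "p\<in>S" "fst p\<noteq>i1" "fst p \<noteq> i2" using assms unfolding NC_def by blast
  then show ?thesis by (intro exI[of _ "fst p"] exI[of _ "snd p"]) simp
qed
lemma nc_cc: assumes "NC S" shows "\<exists>i j. (i,j)\<in>S \<and> j\<noteq>j1 \<and> j\<noteq>j2"
proof -
  obtain p where "p\<in>S" "snd p\<noteq>j1" "snd p \<noteq> j2" using assms unfolding NC_def by blast
  then show ?thesis by (intro exI[of _ "fst p"] exI[of _ "snd p"]) simp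
qed
lemma nc_rc: assumes "NC S" shows "\<exists>i j. (i,j)\<in>S \<and> i\<noteq>i0 \<and> j\<noteq>j0"
proof -
  obtain p where "p\<in>S" "fst p\<noteq>i0" "snd p \<noteq> j0" using assms unfolding NC_def by blast
  then show ?thesis by (intro exI[of _ "fst p"] exI[of _ "snd p"]) simp
qed

lemma N_a:
  assumes w: "wf_mat (m,n,S)" and g: "good S" and nc: "NC S"
    and x: "(R,a)\<in>S" and v: "(R,b)\<in>S" and y: "(Y1,Y2)\<in>S"
    and o: "R<Y1" "a<Y2" "Y2<b"
    and L: "\<And>i j. (i,j)\<in>S \<Longrightarrow> i=R \<or> i=Y1 \<or> j=Y2"
  shows "conc (m,n,S)"
proof -
  obtain j0 where h: "(Y1,j0)\<in>S" "j0\<noteq>Y2"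
  proof -
    obtain i j where "(i,j)\<in>S" "i\<noteq>R" "j\<noteq>Y2" using nc_rc[OF nc, of R Y2] by blast
    then show ?thesis using L that by blast
  qed
  have V1: "R \<le> i" if "(i,Y2)\<in>S" for i
  proof (rule ccontr)
    assume "\<not> R \<le> i"
    then have "i < R" by simp
    then show False using tri'[OF g that x h(1)] tri'[OF g that v h(1)] o h(2) by auto
  qed
  have V2: "i \<le> Y1" if "(i,Y2)\<in>S" for i
  proof (rule ccontr)
    assume "\<not> i \<le> Y1"
    then have "Y1 < i" by simp
    then show False using tri'[OF g x h(1) that] tri'[OF g v h(1) that] o h(2) by auto
  qed
  obtain ip where p: "(ip,Y2)\<in>S" "R<ip" "ip<Y1"
  proof -
    obtain i j where ij: "(i,j)\<in>S" "i\<noteq>R" "i\<noteq>Y1" using nc_rr[OF nc, of R Y1] by blast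
    then have "j = Y2" using L by blast
    then show ?thesis using ij V1 V2 that by force
  qed
  have H5: "j=a' \<or> j=b'" if "(Y1,j)\<in>S" "j\<noteq>Y2" "(R,a')\<in>S" "a'<Y2" "(R,b')\<in>S" "Y2<b'" for j a' b'
    using tri'[OF g that(3) p(1) that(1)] tri'[OF g that(5) p(1) that(1)] p o that(2,4,6) by auto
  have bx: "1 \<le> a" "b \<le> n" "1 \<le> R" "Y1 \<le> m" "Y2 \<le> n" using wfb[OF w x] wfb[OF w v] wfb[OF w y] by auto
  consider (T1) "\<forall>a'. (R,a')\<in>S \<longrightarrow> a'<Y2 \<longrightarrow> a'=a" "\<forall>b'. (R,b')\<in>S \<longrightarrow> Y2<b' \<longrightarrow> b'=b"
    | (T2a) a'' where "(R,a'')\<in>S" "a''<Y2" "a''\<noteq>a"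
    | (T2b) b'' where "(R,b'')\<in>S" "Y2<b''" "b''\<noteq>b" "\<forall>a'. (R,a')\<in>S \<longrightarrow> a'<Y2 \<longrightarrow> a'=a"
    by blast
  then show ?thesis
  proof cases
    case T1
    show ?thesis
    proof (rule conc_t1_tr[OF w, of a Y2 b R Y1])
      fix i j assume ij: "(i,j)\<in>S"
      show "(j = Y2 \<and> R \<le> i \<and> i \<le> Y1) \<or> ((j = a \<or> j = b) \<and> (i = R \<or> i = Y1))"
      proof -
        consider "i=R" | "i=Y1" "j\<noteq>Y2" | "j=Y2" using L[OF ij] by blast
        then show ?thesis
        proof cases
          case 1
          have "j<Y2 \<or> j=Y2 \<or> Y2<j" by arith
          then show ?thesis using T1 ij o 1 by auto
        next
          case 2 then show ?thesis using H5[of j a b] ij x v o by auto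
        next
          case 3 then show ?thesis using V1 V2 ij by auto
        qed
      qed
    qed (use o bx in auto)
  next
    case T2a
    have hb: "j = b" if "(Y1,j)\<in>S" "j\<noteq>Y2" for j
      using H5[OF that x o(2) v o(3)] H5[OF that T2a(1,2) v o(3)] T2a(3) by auto
    have rb: "b' = b" if "(R,b')\<in>S" "Y2<b'" for b'
      using H5[OF h x o(2) that] hb[OF h] o by auto
    show ?thesis
    proof (rule conc_t2_trcr[OF w, of Y2 b "m+1-Y1" "m+1-R"])
      fix i j assume ij: "(i,j)\<in>S"
      have wb: "1\<le>i" "i\<le>m" "1\<le>j" "j\<le>n" using wfb[OF w ij] by auto
      consider "i=R" "j\<le>Y2" | "i=R" "Y2<j" | "i=Y1" "j\<noteq>Y2" | "j=Y2" using L[OF ij] by force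
      then show "let I = j; J = m + 1 - i in I = Y2 \<and> m + 1 - Y1 \<le> J \<and> J \<le> m + 1 - R \<or>
             I = b \<and> 1 \<le> J \<and> J \<le> m + 1 - Y1 \<or> 1 \<le> I \<and> I \<le> Y2 \<and> J = m + 1 - R \<or> I = b \<and> J = m + 1 - R"
      proof cases
        case 1 then show ?thesis using wb by (simp add: Let_def; arith)
      next
        case 2 then show ?thesis using rb[of j] ij by (simp add: Let_def)
      next
        case 3 then show ?thesis using hb[of j] ij bx by (simp add: Let_def; arith)
      next
        case 4 then show ?thesis using V1[of i] V2[of i] ij bx o by (simp add: Let_def; arith)
      qed
    qed (use o bx in auto)
  next
    case T2b
    have ha: "j = a" if "(Y1,j)\<in>S" "j\<noteq>Y2" for j
      using H5[OF that x o(2) v o(3)] H5[OF that x o(2) T2b(1,2)] T2b(3) by auto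
    show ?thesis
    proof (rule conc_t2_trrrcr[OF w, of "n+1-Y2" "n+1-a" "m+1-Y1" "m+1-R"])
      fix i j assume ij: "(i,j)\<in>S"
      have wb: "1\<le>i" "i\<le>m" "1\<le>j" "j\<le>n" using wfb[OF w ij] by auto
      consider "i=R" "Y2\<le>j" | "i=R" "j<Y2" | "i=Y1" "j\<noteq>Y2" | "j=Y2" using L[OF ij] by force
      then show "let I = n + 1 - j; J = m + 1 - i in I = n + 1 - Y2 \<and> m + 1 - Y1 \<le> J \<and> J \<le> m + 1 - R \<or>
             I = n + 1 - a \<and> 1 \<le> J \<and> J \<le> m + 1 - Y1 \<or> 1 \<le> I \<and> I \<le> n + 1 - Y2 \<and> J = m + 1 - R \<or> I = n + 1 - a \<and> J = m + 1 - R"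
      proof cases
        case 1 then show ?thesis using wb by (simp add: Let_def; arith)
      next
        case 2 then show ?thesis using T2b(4) ij by (simp add: Let_def)
      next
        case 3 then show ?thesis using ha[of j] ij bx by (simp add: Let_def; arith)
      next
        case 4 then show ?thesis using V1[of i] V2[of i] ij bx o by (simp add: Let_def; arith)
      qed
    qed (use o bx in auto)
  qed
qed



lemma K:
  assumes g: "good S" and "y\<in>S" "x\<in>S" "v\<in>S" "inc y x" "dec y v"
  shows "fst x = fst v \<or> snd x = snd v"
proof (rule ccontr)
  assume c: "\<not> ?thesis"
  have gg: "\<And>p q s. p\<in>S \<Longrightarrow> q\<in>S \<Longrightarrow> s\<in>S \<Longrightarrow> \<not>(inc p q \<and> inc p s \<and> dec q s) \<and> \<not>(dec p q \<and> dec p s \<and> inc q s)"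
    using g unfolding good_def by blast
  have "inc x v \<or> dec x v" using c unfolding inc_def dec_def by auto
  moreover have "inc x y" "dec v y" using assms(5,6) unfolding inc_def dec_def by auto
  ultimately show False using gg[of x y v] gg[of v y x] assms(2-6) unfolding inc_def dec_def by auto
qed

lemma N_b2:
  assumes w: "wf_mat (m,n,S)" and g: "good S"
    and x: "(R,a)\<in>S" and v: "(R,b)\<in>S" and y: "(Y1,Y2)\<in>S" and z: "(i0,b)\<in>S" and u: "(i0,a)\<in>S"
    and o: "R<Y1" "Y1<i0" "a<Y2" "Y2<b"
    and L: "\<And>i j. (i,j)\<in>S \<Longrightarrow> i=Y1 \<or> j=Y2 \<or> ((i=R \<or> i=i0) \<and> (j=a \<or> j=b))"
  shows "conc (m,n,S)"
proof -
  have Hb: "a \<le> j \<and> j \<le> b" if "(Y1,j)\<in>S" for j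
    using tri'[OF g x that z] o by auto
  have Vb: "R \<le> i \<and> i \<le> i0" if "(i,Y2)\<in>S" for i
  proof -
    have "\<not> i < R" using tri'[OF g that x z] o by auto
    moreover have "\<not> i0 < i" using tri'[OF g x z that] o by auto
    ultimately show ?thesis by simp
  qed
  have HV: False if h: "(Y1,j)\<in>S" "j\<noteq>Y2" and p: "(i,Y2)\<in>S" "i\<noteq>Y1" for i j
  proof -
    have "j<Y2 \<or> Y2<j" "i<Y1 \<or> Y1<i" using h(2) p(2) by arith+
    moreover have "\<not>(j<Y2 \<and> i<Y1)" using tri'[OF g p(1) h(1) z] o by auto
    moreover have "\<not>(Y2<j \<and> i<Y1)" using tri'[OF g p(1) h(1) u] o by auto
    moreover have "\<not>(j<Y2 \<and> Y1<i)" using tri'[OF g v h(1) p(1)] o by auto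
    moreover have "\<not>(Y2<j \<and> Y1<i)" using tri'[OF g x h(1) p(1)] o by auto
    ultimately show False by blast
  qed
  have bx: "1 \<le> a" "b \<le> n" "1 \<le> R" "i0 \<le> m" using wfb[OF w x] wfb[OF w v] wfb[OF w z] by auto
  show ?thesis
  proof (cases "\<exists>j. (Y1,j)\<in>S \<and> j\<noteq>Y2")
    case True
    then obtain j0 where h0: "(Y1,j0)\<in>S" "j0\<noteq>Y2" by blast
    show ?thesis
    proof (rule conc_t1_id[of R Y1 i0 m a b n])
      fix i j assume ij: "(i,j)\<in>S"
      show "(i = Y1 \<and> a \<le> j \<and> j \<le> b) \<or> ((i = R \<or> i = i0) \<and> (j = a \<or> j = b))"
        using L[OF ij] Hb[of j] HV[OF h0, of i] ij o by auto
    qed (use o bx in auto)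
  next
    case False
    show ?thesis
    proof (rule conc_t1_tr[OF w, of a Y2 b R i0])
      fix i j assume ij: "(i,j)\<in>S"
      show "(j = Y2 \<and> R \<le> i \<and> i \<le> i0) \<or> ((j = a \<or> j = b) \<and> (i = R \<or> i = i0))"
        using L[OF ij] Vb[of i] False ij o by auto
    qed (use o bx in auto)
  qed
qed

lemma N_b1:
  assumes w: "wf_mat (m,n,S)" and g: "good S"
    and x: "(R,a)\<in>S" and v: "(R,b)\<in>S" and y: "(Y1,Y2)\<in>S" and z: "(i0,b)\<in>S"
    and o: "R<Y1" "Y1<i0" "a<Y2" "Y2<b"
    and L: "\<And>i j. (i,j)\<in>S \<Longrightarrow> i=Y1 \<or> j=Y2 \<or> (i=R \<and> j<Y2) \<or> (i=R \<and> j=b) \<or> (j=b \<and> Y1<i)"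
  shows "conc (m,n,S)"
proof -
  define A where "A = {j. (R,j)\<in>S \<and> j<Y2}"
  have fA: "finite A" unfolding A_def by (rule finite_subset[of _ "{..<Y2}"]) auto
  have aA: "a \<in> A" using x o unfolding A_def by auto
  define al where "al = Max A"
  have "al \<in> A" using Max_in[OF fA] aA unfolding al_def by auto
  then have al: "(R,al)\<in>S" "al<Y2" unfolding A_def by auto
  have alM: "j \<le> al" if "(R,j)\<in>S" "j<Y2" for j
    using Max_ge[OF fA, of j] that unfolding al_def A_def by auto
  define im where "im = (LEAST i. (i,b)\<in>S \<and> Y1<i)"
  have im: "(im,b)\<in>S" "Y1<im" using LeastI[of "\<lambda>i. (i,b)\<in>S \<and> Y1<i" i0] z o unfolding im_def by auto
  have imL: "im \<le> i" if "(i,b)\<in>S" "Y1<i" for i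
    using Least_le[of "\<lambda>i. (i,b)\<in>S \<and> Y1<i" i] that unfolding im_def by auto
  have Hb: "al \<le> j \<and> j \<le> b" if "(Y1,j)\<in>S" for j
    using tri'[OF g al(1) that z] o al(2) by auto
  have Vb: "R \<le> i \<and> i \<le> im" if "(i,Y2)\<in>S" for i
  proof -
    have "\<not> i < R" using tri'[OF g that x im(1)] o im(2) by auto
    moreover have "\<not> im < i" using tri'[OF g x im(1) that] o im(2) by auto
    ultimately show ?thesis by simp
  qed
  have C1: False if "(Y1,j)\<in>S" "(i,Y2)\<in>S" "j<Y2" "i<Y1" for i j
    using tri'[OF g that(2) that(1) im(1)] o im(2) that(3,4) by auto
  have C2: False if "(Y1,j)\<in>S" "(i,Y2)\<in>S" "j<Y2" "Y1<i" for i j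
    using tri'[OF g v that(1) that(2)] o that(3,4) by auto
  have C3: False if "(Y1,j)\<in>S" "(i,Y2)\<in>S" "Y2<j" "Y1<i" for i j
    using tri'[OF g x that(1) that(2)] o that(3,4) by auto
  have C4: False if "(Y1,j)\<in>S" "(i,Y2)\<in>S" "Y2<j" "j<b" "i<Y1" "R<i" for i j
    using tri'[OF g v that(2) that(1)] o that(3-6) by auto
  have bx: "1 \<le> a" "b \<le> n" "1 \<le> R" "i0 \<le> m" "Y1 \<le> m" "im \<le> m" "1 \<le> al"
    using wfb[OF w x] wfb[OF w v] wfb[OF w z] wfb[OF w y] wfb[OF w im(1)] wfb[OF w al(1)] by auto
  show ?thesis
  proof (cases "\<forall>i. (i,Y2)\<in>S \<longrightarrow> i=Y1 \<or> i=R")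
    case PR: True
    show ?thesis
    proof (cases "\<exists>j. (Y1,j)\<in>S \<and> j<Y2")
      case True
      then obtain j0 where h0: "(Y1,j0)\<in>S" "j0<Y2" by blast
      have nRY: "(R,Y2)\<notin>S" using C1[OF h0(1) _ h0(2)] o by blast
      show ?thesis
      proof (rule conc_t2_rr[OF w, of "m+1-Y1" "m+1-R" al b])
        fix i j assume ij: "(i,j)\<in>S"
        have wb: "1\<le>i" "i\<le>m" "1\<le>j" "j\<le>n" using wfb[OF w ij] by auto
        consider "i=Y1" | "j=Y2" "i\<noteq>Y1" | "i=R" "j<Y2" | "i=R" "j=b" | "j=b" "Y1<i" using L[OF ij] by blast
        then show "let I = m + 1 - i; J = j in I = m + 1 - Y1 \<and> al \<le> J \<and> J \<le> b \<or>
             I = m + 1 - R \<and> 1 \<le> J \<and> J \<le> al \<or> 1 \<le> I \<and> I \<le> m + 1 - Y1 \<and> J = b \<or> I = m + 1 - R \<and> J = b"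
        proof cases
          case 1 then show ?thesis using Hb[of j] ij by (simp add: Let_def)
        next
          case 2 then show ?thesis using PR ij nRY by auto
        next
          case 3 then show ?thesis using alM[of j] ij wb by (simp add: Let_def)
        next
          case 4 then show ?thesis by (simp add: Let_def)
        next
          case 5 then show ?thesis using wb by (simp add: Let_def; arith)
        qed
      qed (use o bx al in auto)
    next
      case False
      show ?thesis
      proof (rule conc_t2_rr[OF w, of "m+1-Y1" "m+1-R" Y2 b])
        fix i j assume ij: "(i,j)\<in>S"
        have wb: "1\<le>i" "i\<le>m" "1\<le>j" "j\<le>n" using wfb[OF w ij] by auto
        consider "i=Y1" | "j=Y2" "i\<noteq>Y1" | "i=R" "j<Y2" | "i=R" "j=b" | "j=b" "Y1<i" using L[OF ij] by blast
        then show "let I = m + 1 - i; J = j in I = m + 1 - Y1 \<and> Y2 \<le> J \<and> J \<le> b \<or>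
             I = m + 1 - R \<and> 1 \<le> J \<and> J \<le> Y2 \<or> 1 \<le> I \<and> I \<le> m + 1 - Y1 \<and> J = b \<or> I = m + 1 - R \<and> J = b"
        proof cases
          case 1 then show ?thesis using Hb[of j] False ij by (auto simp add: Let_def)
        next
          case 2 then show ?thesis using PR ij wb by (auto simp add: Let_def)
        next
          case 3 then show ?thesis using wb by (simp add: Let_def)
        next
          case 4 then show ?thesis by (simp add: Let_def)
        next
          case 5 then show ?thesis using wb by (simp add: Let_def; arith)
        qed
      qed (use o bx in auto)
    qed
  next
    case False
    then obtain ip where p: "(ip,Y2)\<in>S" "ip\<noteq>Y1" "ip\<noteq>R" by blast
    show ?thesis
    proof (cases "\<forall>j. (Y1,j)\<in>S \<longrightarrow> j=Y2")
      case HE: True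
      show ?thesis
      proof (rule conc_t2_trcr[OF w, of Y2 b "m+1-im" "m+1-R"])
        fix i j assume ij: "(i,j)\<in>S"
        have wb: "1\<le>i" "i\<le>m" "1\<le>j" "j\<le>n" using wfb[OF w ij] by auto
        consider "j=Y2" | "i=R" "j<Y2" | "i=R" "j=b" | "j=b" "Y1<i" using L[OF ij] HE ij by blast
        then show "let I = j; J = m + 1 - i in I = Y2 \<and> m + 1 - im \<le> J \<and> J \<le> m + 1 - R \<or>
             I = b \<and> 1 \<le> J \<and> J \<le> m + 1 - im \<or> 1 \<le> I \<and> I \<le> Y2 \<and> J = m + 1 - R \<or> I = b \<and> J = m + 1 - R"
        proof cases
          case 1 then show ?thesis using Vb[of i] ij bx by (simp add: Let_def; arith)
        next
          case 2 then show ?thesis using wb by (simp add: Let_def)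
        next
          case 3 then show ?thesis by (simp add: Let_def)
        next
          case 4 then show ?thesis using imL[of i] ij wb by (simp add: Let_def; arith)
        qed
      qed (use o bx im in auto)
    next
      case False
      then obtain j0 where h0: "(Y1,j0)\<in>S" "j0\<noteq>Y2" by blast
      have Vup: "i \<le> Y1" if "(i,Y2)\<in>S" for i
      proof (rule ccontr)
        assume "\<not> i \<le> Y1"
        then have "Y1 < i" by simp
        moreover have "j0<Y2 \<or> Y2<j0" using h0(2) by arith
        ultimately show False using C2[OF h0(1) that] C3[OF h0(1) that] by blast
      qed
      have ipb: "R<ip" "ip<Y1" using Vb[OF p(1)] Vup[OF p(1)] p(2,3) by auto
      have Hb2: "j = b" if "(Y1,j)\<in>S" "j\<noteq>Y2" for j
      proof -
        have "\<not> j<Y2" using C1[OF that(1) p(1) _ ipb(2)] by blast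
        moreover have "\<not> (Y2<j \<and> j<b)" using C4[OF that(1) p(1) _ _ ipb(2) ipb(1)] by blast
        ultimately show ?thesis using Hb[OF that(1)] that(2) by arith
      qed
      show ?thesis
      proof (rule conc_t2_trcr[OF w, of Y2 b "m+1-Y1" "m+1-R"])
        fix i j assume ij: "(i,j)\<in>S"
        have wb: "1\<le>i" "i\<le>m" "1\<le>j" "j\<le>n" using wfb[OF w ij] by auto
        consider "i=Y1" "j=b" | "j=Y2" | "i=R" "j<Y2" | "i=R" "j=b" | "j=b" "Y1<i" using L[OF ij] Hb2[of j] ij by blast
        then show "let I = j; J = m + 1 - i in I = Y2 \<and> m + 1 - Y1 \<le> J \<and> J \<le> m + 1 - R \<or>
             I = b \<and> 1 \<le> J \<and> J \<le> m + 1 - Y1 \<or> 1 \<le> I \<and> I \<le> Y2 \<and> J = m + 1 - R \<or> I = b \<and> J = m + 1 - R"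
        proof cases
          case 1 then show ?thesis using bx by (simp add: Let_def; arith)
        next
          case 2 then show ?thesis using Vb[of i] Vup[of i] ij bx by (simp add: Let_def; arith)
        next
          case 3 then show ?thesis using wb by (simp add: Let_def)
        next
          case 4 then show ?thesis by (simp add: Let_def)
        next
          case 5 then show ?thesis using wb by (simp add: Let_def; arith)
        qed
      qed (use o bx in auto)
    qed
  qed
qed



lemma trich: "fst p \<noteq> fst q \<Longrightarrow> snd p \<noteq> snd q \<Longrightarrow> inc p q \<or> dec p q"
  unfolding inc_def dec_def by arith

lemma N_b:
  assumes w: "wf_mat (m,n,S)" and g: "good S"
    and x: "(R,a)\<in>S" and v: "(R,b)\<in>S" and y: "(Y1,Y2)\<in>S" and z: "(i0,b)\<in>S"
    and o: "R<Y1" "Y1<i0" "a<Y2" "Y2<b"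
  shows "conc (m,n,S)"
proof -
  have ix: "inc (Y1,Y2) (R,a)" "inc (Y1,Y2) (i0,b)" "dec (Y1,Y2) (R,b)" using o unfolding inc_def dec_def by auto
  have cls: "(dec (Y1,Y2) (i,j) \<and> (R=i \<or> a=j) \<and> (i0=i \<or> b=j)) \<or> (inc (Y1,Y2) (i,j) \<and> (i=R \<or> j=b))"
    if ij: "(i,j)\<in>S" "i\<noteq>Y1" "j\<noteq>Y2" for i j
  proof -
    have "inc (Y1,Y2) (i,j) \<or> dec (Y1,Y2) (i,j)" using trich[of "(Y1,Y2)" "(i,j)"] ij by auto
    moreover have "dec (Y1,Y2) (i,j) \<Longrightarrow> (R=i \<or> a=j) \<and> (i0=i \<or> b=j)"
      using K[OF g y x ij(1) ix(1)] K[OF g y z ij(1) ix(2)] by auto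
    moreover have "inc (Y1,Y2) (i,j) \<Longrightarrow> (i=R \<or> j=b)"
      using K[OF g y ij(1) v _ ix(3)] by auto
    ultimately show ?thesis by blast
  qed
  show ?thesis
  proof (cases "(i0,a)\<in>S")
    case True
    have iu: "dec (Y1,Y2) (i0,a)" using o unfolding dec_def by auto
    show ?thesis
    proof (rule N_b2[OF w g x v y z True o])
      fix i j assume ij: "(i,j)\<in>S"
      show "i=Y1 \<or> j=Y2 \<or> ((i=R \<or> i=i0) \<and> (j=a \<or> j=b))"
      proof (cases "i=Y1 \<or> j=Y2")
        case False
        then have c: "(dec (Y1,Y2) (i,j) \<and> (R=i \<or> a=j) \<and> (i0=i \<or> b=j)) \<or> (inc (Y1,Y2) (i,j) \<and> (i=R \<or> j=b))"
          using cls[OF ij] by blast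
        have "inc (Y1,Y2) (i,j) \<Longrightarrow> i=i0 \<or> j=a" using K[OF g y ij True _ iu] by auto
        then show ?thesis using c o by auto
      qed auto
    qed
  next
    case False
    show ?thesis
    proof (rule N_b1[OF w g x v y z o])
      fix i j assume ij: "(i,j)\<in>S"
      show "i=Y1 \<or> j=Y2 \<or> (i=R \<and> j<Y2) \<or> (i=R \<and> j=b) \<or> (j=b \<and> Y1<i)"
      proof (cases "i=Y1 \<or> j=Y2")
        case nn: False
        then have c: "(dec (Y1,Y2) (i,j) \<and> (R=i \<or> a=j) \<and> (i0=i \<or> b=j)) \<or> (inc (Y1,Y2) (i,j) \<and> (i=R \<or> j=b))"
          using cls[OF ij] by blast
        then show ?thesis using False ij o unfolding inc_def dec_def by auto
      qed auto
    qed
  qed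
qed

lemma N:
  assumes w: "wf_mat (m,n,S)" and g: "good S" and nc: "NC S"
    and x: "(R,a)\<in>S" and v: "(R,b)\<in>S" and y: "(Y1,Y2)\<in>S"
    and o: "R<Y1" "a<Y2" "Y2<b"
  shows "conc (m,n,S)"
proof -
  have ix: "inc (Y1,Y2) (R,a)" "dec (Y1,Y2) (R,b)" using o unfolding inc_def dec_def by auto
  show ?thesis
  proof (cases "\<exists>i0. (i0,b)\<in>S \<and> Y1<i0")
    case True
    then obtain i0 where "(i0,b)\<in>S" "Y1<i0" by blast
    then show ?thesis using N_b[OF w g x v y] o by blast
  next
    case nb: False
    show ?thesis
    proof (cases "\<exists>i0. (i0,a)\<in>S \<and> Y1<i0")
      case True
      then obtain i0 where z: "(i0,a)\<in>S" "Y1<i0" by blast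
      have h: "hyp (col_rev (m,n,S))" using hyp_cr[of "(m,n,S)"] w g nc unfolding hyp_def by simp
      let ?S = "(\<lambda>(i,j). (i,n+1-j)) ` S"
      have h': "wf_mat (m,n,?S)" "good ?S" using h unfolding cr_eq hyp_def by auto
      have bx: "b \<le> n" using wfb[OF w v] by auto
      have "conc (m,n,?S)"
      proof (rule N_b[OF h'(1) h'(2), of R "n+1-b" "n+1-a" Y1 "n+1-Y2" i0])
        show "(R, n+1-b) \<in> ?S" using v by force
        show "(R, n+1-a) \<in> ?S" using x by force
        show "(Y1, n+1-Y2) \<in> ?S" using y by force
        show "(i0, n+1-a) \<in> ?S" using z by force
      qed (use o z bx in auto)
      then show ?thesis using conc_cr[OF w] unfolding cr_eq by simp
    next
      case na: False
      show ?thesis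
      proof (rule N_a[OF w g nc x v y o])
        fix i j assume ij: "(i,j)\<in>S"
        show "i=R \<or> i=Y1 \<or> j=Y2"
        proof (rule ccontr)
          assume c: "\<not> ?thesis"
          then have "inc (Y1,Y2) (i,j) \<or> dec (Y1,Y2) (i,j)" using trich[of "(Y1,Y2)" "(i,j)"] by auto
          moreover have "dec (Y1,Y2) (i,j) \<Longrightarrow> False"
            using K[OF g y x ij ix(1)] na nb ij c o unfolding dec_def by auto
          moreover have "inc (Y1,Y2) (i,j) \<Longrightarrow> False"
            using K[OF g y ij v _ ix(2)] na nb ij c o unfolding inc_def by auto
          ultimately show False by blast
        qed
      qed
    qed
  qed
qed



lemma inc_sym: "inc p q = inc q p" unfolding inc_def by auto
lemma dec_sym: "dec p q = dec q p" unfolding dec_def by auto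

definition HUB :: "(nat\<times>nat) set \<Rightarrow> bool" where
  "HUB S = (\<exists>yy\<in>S. \<exists>xx\<in>S. \<exists>vv\<in>S. inc yy xx \<and> dec yy vv)"

lemma hub_nc:
  assumes "e\<in>S" "d\<in>S" "e'\<in>S" "d'\<in>S" "fst e \<noteq> fst d" "snd e \<noteq> snd d" "inc e e'" "dec d d'"
  shows "HUB S"
proof -
  have "inc e d \<or> dec e d" using trich assms(5,6) by blast
  then show ?thesis
  proof
    assume "inc e d" then show ?thesis unfolding HUB_def using assms inc_sym by blast
  next
    assume "dec e d" then show ?thesis unfolding HUB_def using assms by blast
  qed
qed

lemma hub_exists:
  assumes nc: "NC S" and p: "p1\<in>S" "p2\<in>S" "inc p1 p2" and q: "q1\<in>S" "q2\<in>S" "dec q1 q2"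
  shows "HUB S"
proof -
  have p': "inc p2 p1" using p(3) inc_sym by blast
  have q': "dec q2 q1" using q(3) dec_sym by blast
  have nc1: "HUB S" if "fst e \<noteq> fst d" "snd e \<noteq> snd d" "e\<in>{p1,p2}" "d\<in>{q1,q2}" for e d
    using that hub_nc[OF _ _ _ _ that(1,2)] p p' q q' by blast
  show ?thesis
  proof (cases "\<exists>e\<in>{p1,p2}. \<exists>d\<in>{q1,q2}. fst e \<noteq> fst d \<and> snd e \<noteq> snd d")
    case True then show ?thesis using nc1 by blast
  next
    case False
    then have col: "\<forall>e\<in>{p1,p2}. \<forall>d\<in>{q1,q2}. fst e = fst d \<or> snd e = snd d" by blast
    have qd: "fst q1 \<noteq> fst q2" "snd q1 \<noteq> snd q2" using q(3) unfolding dec_def by auto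
    have pd: "fst p1 \<noteq> fst p2" "snd p1 \<noteq> snd p2" using p(3) unfolding inc_def by auto
    have prow: "fst e = fst q1 \<or> fst e = fst q2" if "e\<in>{p1,p2}" for e
    proof -
      have "fst e = fst q1 \<or> snd e = snd q1" "fst e = fst q2 \<or> snd e = snd q2" using col that by auto
      then show ?thesis using qd by auto
    qed
    obtain zi zj where z: "(zi,zj)\<in>S" "zi \<noteq> fst q1" "zi \<noteq> fst q2" using nc_rr[OF nc] by blast
    obtain d where d: "d\<in>{q1,q2}" "snd d \<noteq> zj" using qd by blast
    obtain e where e: "e\<in>{p1,p2}" "snd e \<noteq> zj" using pd by blast
    have dz: "fst d \<noteq> zi" using d z by auto
    have ez: "fst e \<noteq> zi" using prow[OF e(1)] z by auto
    have dS: "d\<in>S" and eS: "e\<in>S" using d e p q by auto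
    have dd: "\<exists>d'\<in>S. dec d d'" using d q q' by blast
    have ee: "\<exists>e'\<in>S. inc e e'" using e p p' by blast
    have "inc (zi,zj) d \<or> dec (zi,zj) d" using trich[of "(zi,zj)" d] dz d by auto
    then show ?thesis
    proof
      assume "inc (zi,zj) d"
      then show ?thesis using dd dS z(1) inc_sym unfolding HUB_def by blast
    next
      assume zd: "dec (zi,zj) d"
      have "inc (zi,zj) e \<or> dec (zi,zj) e" using trich[of "(zi,zj)" e] ez e by auto
      then show ?thesis
      proof
        assume "inc (zi,zj) e" then show ?thesis using zd z(1) dS eS unfolding HUB_def by blast
      next
        assume "dec (zi,zj) e" then show ?thesis using ee eS z(1) dec_sym unfolding HUB_def by blast
      qed
    qed
  qed
qed

lemma M:
  assumes w: "wf_mat (m,n,S)" and g: "good S" and nc: "NC S" and hub: "HUB S"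
  shows "conc (m,n,S)"
proof -
  obtain yy xx vv where s: "yy\<in>S" "xx\<in>S" "vv\<in>S" and iv: "inc yy xx" "dec yy vv" using hub unfolding HUB_def by blast
  obtain Y1 Y2 where yy: "yy = (Y1,Y2)" by (cases yy)
  obtain x1 x2 where xx: "xx = (x1,x2)" by (cases xx)
  obtain v1 v2 where vv: "vv = (v1,v2)" by (cases vv)
  have k: "x1 = v1 \<or> x2 = v2" using K[OF g s iv] xx vv by simp
  have iv': "(Y1<x1 \<and> Y2<x2) \<or> (x1<Y1 \<and> x2<Y2)" "(Y1<v1 \<and> v2<Y2) \<or> (v1<Y1 \<and> Y2<v2)"
    using iv unfolding yy xx vv inc_def dec_def by auto
  have S: "(Y1,Y2)\<in>S" "(x1,x2)\<in>S" "(v1,v2)\<in>S" using s yy xx vv by auto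
  have hyp0: "hyp (m,n,S)" using w g nc unfolding hyp_def by simp
  consider "x1 = v1" "x1 < Y1" | "x1 = v1" "Y1 < x1" | "x2 = v2" "x2 < Y2" | "x2 = v2" "Y2 < x2"
    using k iv' by arith
  then show ?thesis
  proof cases
    case 1
    then show ?thesis using N[OF w g nc S(2), of v2 Y1 Y2] S iv' by auto
  next
    case 2
    let ?S = "(\<lambda>(i,j). (m+1-i,j)) ` S"
    have h: "wf_mat (m,n,?S)" "good ?S" "NC ?S" using hyp_rr[OF hyp0] unfolding rr_eq hyp_def by auto
    have bx: "x1 \<le> m" "Y1 \<le> m" using wfb[OF w S(2)] wfb[OF w S(1)] by auto
    have "conc (m,n,?S)"
    proof (rule N[OF h, of "m+1-x1" v2 x2 "m+1-Y1" Y2])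
      show "(m+1-x1, v2) \<in> ?S" using S(3) 2 by force
      show "(m+1-x1, x2) \<in> ?S" using S(2) by force
      show "(m+1-Y1, Y2) \<in> ?S" using S(1) by force
    qed (use 2 iv' bx in auto)
    then show ?thesis using conc_rr[OF w] unfolding rr_eq by simp
  next
    case 3
    let ?S = "(\<lambda>(i,j). (j,i)) ` S"
    have h: "wf_mat (n,m,?S)" "good ?S" "NC ?S" using hyp_tr[OF hyp0] unfolding tr_eq hyp_def by auto
    have "conc (n,m,?S)"
    proof (rule N[OF h, of x2 x1 v1 Y2 Y1])
      show "(x2, x1) \<in> ?S" using S(2) by force
      show "(x2, v1) \<in> ?S" using S(3) 3 by force
      show "(Y2, Y1) \<in> ?S" using S(1) by force
    qed (use 3 iv' in auto)
    then show ?thesis using conc_tr[OF w] unfolding tr_eq by simp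
  next
    case 4
    let ?T = "(\<lambda>(i,j). (j,i)) ` S"
    let ?S = "(\<lambda>(i,j). (n+1-i,j)) ` ?T"
    have hT: "hyp (n,m,?T)" using hyp_tr[OF hyp0] unfolding tr_eq by simp
    have h: "wf_mat (n,m,?S)" "good ?S" "NC ?S" using hyp_rr[OF hT] unfolding rr_eq hyp_def by auto
    have wT: "wf_mat (n,m,?T)" using hT unfolding hyp_def by simp
    have bx: "x2 \<le> n" "Y2 \<le> n" using wfb[OF w S(2)] wfb[OF w S(1)] by auto
    have "conc (n,m,?S)"
    proof (rule N[OF h, of "n+1-x2" v1 x1 "n+1-Y2" Y1])
      show "(n+1-x2, v1) \<in> ?S" using S(3) 4 by force
      show "(n+1-x2, x1) \<in> ?S" using S(2) by force
      show "(n+1-Y2, Y1) \<in> ?S" using S(1) by force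
    qed (use 4 iv' bx in auto)
    then have "conc (n,m,?T)" using conc_rr[OF wT] unfolding rr_eq by simp
    then show ?thesis using conc_tr[OF w] unfolding tr_eq by simp
  qed
qed

theorem lemma3p17:
  fixes P :: bmat
  assumes "wf_mat P"
    and "\<not> interval_minor Q1 P" and "\<not> interval_minor Q2 P"
    and "\<not> interval_minor Q3 P" and "\<not> interval_minor Q4 P"
    and "interval_minor D2 P" and "interval_minor D2bar P"
    and "\<not> coverable_by 2 P"
  shows "\<exists>P0. dihedral_image P P0 \<and> (type1 P0 \<or> type2 P0)"
proof -
  obtain m n S where P: "P = (m,n,S)" by (cases P)
  have w: "wf_mat (m,n,S)" using assms(1) P by simp
  have g: "good S" using good_of_mono3[OF mono3_of[OF w]] assms(2-5) P by simp
  have nc: "NC S" using NC_of[OF w] assms(8) P by simp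
  obtain p1 p2 where p: "p1\<in>S" "p2\<in>S" "fst p1 < fst p2" "snd p1 < snd p2" using im_D2[of m n S] assms(6) P by auto
  obtain q1 q2 where q: "q1\<in>S" "q2\<in>S" "fst q1 < fst q2" "snd q2 < snd q1" using im_D2bar[of m n S] assms(7) P by auto
  have "inc p1 p2" using p unfolding inc_def by auto
  moreover have "dec q1 q2" using q unfolding dec_def by auto
  ultimately have "HUB S" using hub_exists[OF nc p(1,2) _ q(1,2)] by blast
  then have "conc (m,n,S)" using M[OF w g nc] by blast
  then show ?thesis unfolding conc_def P .
qed


end
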